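(* Let $\beta\in(0,\infty)$ and, for each $N\ge 1$, let $K=K_N$ be a positive integer with $K_N/N\to\beta$ as $N\to\infty$. Let $\boldsymbol{S}\in\mathbb{R}^{N\times K}$ be a random time-hopping matrix with $N_{\mathsf s}=1$, i.e. its columns $\boldsymbol{s}_1,\dots,\boldsymbol{s}_K$ are independent, and $\boldsymbol{s}_k=\epsilon_k\boldsymbol{e}_{\pi_k}$ where $\pi_k$ is uniform on $\{1,\dots,N\}$, $\epsilon_k$ is uniform on $\{-1,+1\}$, and all $\pi_k,\epsilon_k$ are independent. For an integer $L\ge 1$ let \[ m_L:=\frac{1}{N}\operatorname{Tr}\big(\boldsymbol{S}\boldsymbol{S}^{\mathsf T}\big)^L. \] Then, as $N\to\infty$, $m_L$ converges in probability to \[ \bar m_L:=\sum_{\ell=1}^{L}\left\{ {L \atop \ell}\right\}\beta^{\ell}, \] the $L$th moment of a Poisson distribution with mean $\beta$, where $\left\{ {L \atop \ell}\right\}$ denotes the Stirling number of the second kind.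
   Context: $\boldsymbol{e}_i$ denotes the $i$th standard basis vector of $\mathbb{R}^N$. The limit regime $N\to\infty$, $K\to\infty$, $K/N\to\beta$ is called the large-system limit. *)

theory Defs
  imports "HOL-Probability.Probability" "HOL-Combinatorics.Stirling" "Jordan_Normal_Form.Matrix"
begin

text \<open>Random time-hopping matrix with N_s = 1. An outcome is a function
  x :: nat => nat * real on the column indices k < K, where fst (x k) = pi_k in {0..<N}
  (0-based row index) and snd (x k) = epsilon_k in {-1,1}.\<close>

definition th_pmf :: "nat \<Rightarrow> nat \<Rightarrow> (nat \<Rightarrow> nat \<times> real) pmf" where
  "th_pmf N K = Pi_pmf {..<K} (0, 0)
      (\<lambda>_. pair_pmf (pmf_of_set {..<N}) (pmf_of_set {-1, 1}))"

definition th_matrix :: "nat \<Rightarrow> nat \<Rightarrow> (nat \<Rightarrow> nat \<times> real) \<Rightarrow> real mat" where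
  "th_matrix N K x = mat N K (\<lambda>(i, k). if i = fst (x k) then snd (x k) else 0)"

definition moment_L :: "nat \<Rightarrow> nat \<Rightarrow> nat \<Rightarrow> (nat \<Rightarrow> nat \<times> real) \<Rightarrow> real" where
  "moment_L L N K x =
     (let G = (th_matrix N K x * transpose_mat (th_matrix N K x)) ^\<^sub>m L
      in (\<Sum>i<N. G $$ (i, i))) / real N"

definition poisson_moment :: "nat \<Rightarrow> real \<Rightarrow> real" where
  "poisson_moment L \<beta> = (\<Sum>l = 1..L. real (Stirling L l) * \<beta> ^ l)"

end

theory Submission
  imports Defs
begin

definition MM :: "nat \<Rightarrow> nat \<Rightarrow> (nat \<Rightarrow> real) \<Rightarrow> real" where
  "MM L K w = (\<Sum>f\<in>PiE {..<L} (\<lambda>_. {..<K}). w (card (f ` {..<L})))"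

definition ff :: "nat \<Rightarrow> nat \<Rightarrow> real" where
  "ff K l = (\<Prod>i<l. real K - real i)"

lemma sum_card_insert:
  assumes "S \<subseteq> {..<K}"
  shows "(\<Sum>y<K. w (card (insert y S))) = real (card S) * w (card S) + (real K - real (card S)) * w (Suc (card S))"
proof -
  have fin: "finite S" using assms finite_subset by blast
  have "(\<Sum>y<K. w (card (insert y S))) = (\<Sum>y<K. if y \<in> S then w (card S) else w (Suc (card S)))"
    by (intro sum.cong) (auto simp: insert_absorb fin)
  also have "\<dots> = (\<Sum>y\<in>{..<K} \<inter> {y. y\<in>S}. w (card S)) + (\<Sum>y\<in>{..<K} \<inter> - {y. y\<in>S}. w (Suc (card S)))"
    by (rule sum.If_cases) simp
  also have "{..<K} \<inter> {y. y\<in>S} = S" using assms by auto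
  also have "card ({..<K} \<inter> - {y. y\<in>S}) = K - card S"
  proof -
    have "{..<K} \<inter> - {y. y\<in>S} = {..<K} - S" by auto
    thus ?thesis using assms fin by (simp add: card_Diff_subset)
  qed
  moreover have "card S \<le> K" using assms by (metis card_lessThan card_mono finite_lessThan)
  ultimately show ?thesis by (simp add: of_nat_diff)
qed

lemma MM_Suc: "MM (Suc L) K w = MM L K (\<lambda>l. real l * w l + (real K - real l) * w (Suc l))"
proof -
  have e: "{..<Suc L} \<inter> {x. x \<noteq> L} = {..<L}" "{..<L} \<inter> {x. x \<noteq> L} = {..<L}" by auto
  have "MM (Suc L) K w = (\<Sum>f\<in>PiE (insert L {..<L}) (\<lambda>_. {..<K}). w (card (f ` {..<Suc L})))"
    unfolding MM_def by (simp add: lessThan_Suc)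
  also have "\<dots> = (\<Sum>(y,g)\<in>{..<K} \<times> PiE {..<L} (\<lambda>_. {..<K}). w (card ((g(L:=y)) ` {..<Suc L})))"
    by (intro sum.reindex_bij_witness[of _ "\<lambda>(y,g). g(L := y)" "\<lambda>g. (g L, g(L := undefined))"])
       (auto simp: PiE_def extensional_def e lessThan_Suc)
  also have "\<dots> = (\<Sum>(y,g)\<in>{..<K} \<times> PiE {..<L} (\<lambda>_. {..<K}). w (card (insert y (g ` {..<L}))))"
  proof (intro sum.cong refl, clarify)
    fix y g assume "g \<in> PiE {..<L} (\<lambda>_. {..<K})"
    have "(g(L:=y)) ` {..<Suc L} = insert y (g ` {..<L})"
      by (auto simp: lessThan_Suc image_iff)
    thus "w (card ((g(L:=y)) ` {..<Suc L})) = w (card (insert y (g ` {..<L})))" by simp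
  qed
  also have "\<dots> = (\<Sum>g\<in>PiE {..<L} (\<lambda>_. {..<K}). \<Sum>y<K. w (card (insert y (g ` {..<L}))))"
    by (subst sum.cartesian_product[symmetric]) (subst sum.swap, simp)
  also have "\<dots> = (\<Sum>g\<in>PiE {..<L} (\<lambda>_. {..<K}). real (card (g ` {..<L})) * w (card (g ` {..<L}))
        + (real K - real (card (g ` {..<L}))) * w (Suc (card (g ` {..<L}))))"
    by (intro sum.cong refl sum_card_insert) (auto simp: PiE_def)
  finally show ?thesis unfolding MM_def .
qed

lemma ff_Suc: "ff K (Suc l) = ff K l * (real K - real l)"
  unfolding ff_def by simp

lemma MM_Stirling: "MM L K w = (\<Sum>l\<le>L. real (Stirling L l) * ff K l * w l)"
proof (induction L arbitrary: w)
  case 0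
  have "PiE {..<0::nat} (\<lambda>_. {..<K}) = {\<lambda>_. undefined}" by simp
  thus ?case by (simp add: MM_def ff_def)
next
  case (Suc L)
  define g where "g l = real l * real (Stirling L l) * ff K l * w l" for l
  have "MM (Suc L) K w = (\<Sum>l\<le>L. real (Stirling L l) * ff K l * (real l * w l + (real K - real l) * w (Suc l)))"
    by (simp add: MM_Suc Suc.IH)
  also have "\<dots> = (\<Sum>l\<le>L. g l) + (\<Sum>l\<le>L. real (Stirling L l) * ff K (Suc l) * w (Suc l))"
    by (simp add: g_def ff_Suc sum.distrib[symmetric] algebra_simps)
  also have "(\<Sum>l\<le>L. g l) = (\<Sum>l\<le>L. g (Suc l))"
  proof -
    have "(\<Sum>l\<le>Suc L. g l) = g 0 + (\<Sum>l\<le>L. g (Suc l))" by (rule sum.atMost_Suc_shift)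
    moreover have "(\<Sum>l\<le>Suc L. g l) = (\<Sum>l\<le>L. g l)" by (simp add: g_def)
    moreover have "g 0 = 0" by (simp add: g_def)
    ultimately show ?thesis by simp
  qed
  also have "(\<Sum>l\<le>L. g (Suc l)) + (\<Sum>l\<le>L. real (Stirling L l) * ff K (Suc l) * w (Suc l))
      = (\<Sum>l\<le>L. real (Stirling (Suc L) (Suc l)) * ff K (Suc l) * w (Suc l))"
    by (simp add: g_def sum.distrib[symmetric] algebra_simps)
  also have "\<dots> = (\<Sum>l\<le>Suc L. real (Stirling (Suc L) l) * ff K l * w l)"
    by (subst sum.atMost_Suc_shift) simp
  finally show ?case .
qed

abbreviation pp :: "nat \<Rightarrow> (nat \<times> real) pmf" where "pp N \<equiv> pair_pmf (pmf_of_set {..<N}) (pmf_of_set {-1, 1::real})"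

lemma set_pos: "(N::nat) > 0 \<Longrightarrow> set_pmf (pmf_of_set {..<N}) = {..<N}"
  by (rule set_pmf_of_set) auto

lemma set_pp: "N > 0 \<Longrightarrow> set_pmf (pp N) = {..<N} \<times> {-1, 1}"
  by (simp add: set_pos)

lemma fin_pp: "N > 0 \<Longrightarrow> finite (set_pmf (pp N))"
  by (simp add: set_pos)

lemma set_th: "N > 0 \<Longrightarrow> set_pmf (th_pmf N K) = PiE_dflt {..<K} (0,0) (\<lambda>_. {..<N} \<times> {-1, 1})"
  unfolding th_pmf_def by (subst set_Pi_pmf) (auto simp: o_def set_pos)

lemma fin_th: "N > 0 \<Longrightarrow> finite (set_pmf (th_pmf N K))"
  by (simp add: set_th finite_PiE_dflt)

lemma int_th: "N > 0 \<Longrightarrow> integrable (measure_pmf (th_pmf N K)) (f :: _ \<Rightarrow> real)"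
  by (intro integrable_measure_pmf_finite fin_th)

lemma th_vals: "N > 0 \<Longrightarrow> x \<in> set_pmf (th_pmf N K) \<Longrightarrow> k < K \<Longrightarrow> fst (x k) < N \<and> (snd (x k) = -1 \<or> snd (x k) = 1)"
  by (auto simp: set_th PiE_dflt_def)

lemma E_pp: "N > 0 \<Longrightarrow> measure_pmf.expectation (pp N) (\<lambda>v. g (fst v)) = (\<Sum>j<N. g j) / real N"
proof -
  assume N: "N > 0"
  have "measure_pmf.expectation (pp N) (\<lambda>v. g (fst v)) = measure_pmf.expectation (map_pmf fst (pp N)) g"
    by simp
  also have "\<dots> = measure_pmf.expectation (pmf_of_set {..<N}) g" by (simp only: map_fst_pair_pmf)
  also have "\<dots> = (\<Sum>j<N. g j) / real N" using N by (subst integral_pmf_of_set) auto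
  finally show ?thesis .
qed

lemma prod_01: "finite A \<Longrightarrow> (\<Prod>k\<in>A. if P k then 1 else 0::real) = (if \<forall>k\<in>A. P k then 1 else 0)"
  by (induction A rule: finite_induct) auto

definition ind :: "nat set \<Rightarrow> nat \<Rightarrow> (nat \<Rightarrow> nat \<times> real) \<Rightarrow> real" where
  "ind F i x = (if \<forall>k\<in>F. fst (x k) = i then 1 else 0)"

lemma ind_prod: "F \<subseteq> {..<K} \<Longrightarrow> ind F i x = (\<Prod>k<K. (\<lambda>k v. if k \<in> F \<and> fst v \<noteq> i then 0 else 1) k (x k))"
proof -
  assume F: "F \<subseteq> {..<K}"
  have "(\<Prod>k<K. (\<lambda>k v. if k \<in> F \<and> fst v \<noteq> i then 0 else 1) k (x k)) = (\<Prod>k<K. if \<not> (k \<in> F \<and> fst (x k) \<noteq> i) then 1 else (0::real))"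
    by (intro prod.cong) auto
  also have "\<dots> = (if \<forall>k\<in>{..<K}. \<not> (k \<in> F \<and> fst (x k) \<noteq> i) then 1 else 0)"
    by (rule prod_01) simp
  also have "\<dots> = ind F i x" unfolding ind_def using F by auto
  finally show ?thesis by simp
qed

lemma E_factor:
  assumes "N > 0" "i < N"
  shows "measure_pmf.expectation (pp N) (\<lambda>v. if k \<in> F \<and> fst v \<noteq> i then 0 else 1) = (if k \<in> F then 1 / real N else 1)"
proof -
  have "measure_pmf.expectation (pp N) (\<lambda>v. if k \<in> F \<and> fst v \<noteq> i then 0 else 1) =
     (\<Sum>j<N. if k \<in> F \<and> j \<noteq> i then 0 else 1::real) / real N"
    using E_pp[OF assms(1), of "\<lambda>j. if k \<in> F \<and> j \<noteq> i then 0 else 1"] by simp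
  also have "\<dots> = (if k \<in> F then 1 / real N else 1)"
  proof (cases "k \<in> F")
    case True
    have "(\<Sum>j<N. if k \<in> F \<and> j \<noteq> i then 0 else 1::real) = (\<Sum>j<N. if j = i then 1 else 0)"
      by (intro sum.cong) (auto simp: True)
    also have "\<dots> = 1" using assms by simp
    finally show ?thesis using True by simp
  qed (use assms in simp)
  finally show ?thesis .
qed

lemma E_ind:
  assumes "N > 0" "i < N" "F \<subseteq> {..<K}"
  shows "measure_pmf.expectation (th_pmf N K) (ind F i) = (1 / real N) ^ card F"
proof -
  have "measure_pmf.expectation (th_pmf N K) (ind F i) =
     measure_pmf.expectation (th_pmf N K) (\<lambda>x. \<Prod>k<K. (\<lambda>k v. if k \<in> F \<and> fst v \<noteq> i then 0 else 1) k (x k))"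
    by (rule arg_cong[where f = "measure_pmf.expectation (th_pmf N K)"], rule ext, rule ind_prod[OF assms(3)])
  also have "\<dots> = (\<Prod>k<K. measure_pmf.expectation (pp N) (\<lambda>v. if k \<in> F \<and> fst v \<noteq> i then 0 else 1))"
    unfolding th_pmf_def
    by (rule expectation_prod_Pi_pmf) (auto intro: integrable_measure_pmf_finite fin_pp assms)
  also have "\<dots> = (\<Prod>k<K. if k \<in> F then 1 / real N else 1)"
    by (intro prod.cong refl E_factor[OF assms(1,2)])
  also have "\<dots> = (\<Prod>k\<in>{..<K} \<inter> F. 1 / real N)"
    by (subst prod.inter_restrict) auto
  also have "{..<K} \<inter> F = F" using assms(3) by auto
  finally show ?thesis by simp
qed

lemma E_ind2:
  assumes "N > 0" "i < N" "i' < N" "i \<noteq> i'" "F \<subseteq> {..<K}" "G \<subseteq> {..<K}"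
  shows "measure_pmf.expectation (th_pmf N K) (\<lambda>x. ind F i x * ind G i' x)
     \<le> measure_pmf.expectation (th_pmf N K) (ind F i) * measure_pmf.expectation (th_pmf N K) (ind G i')"
proof -
  define h where "h = (\<lambda>k (v::nat\<times>real). (if k \<in> F \<and> fst v \<noteq> i then 0 else 1) * (if k \<in> G \<and> fst v \<noteq> i' then 0 else (1::real)))"
  have "measure_pmf.expectation (th_pmf N K) (\<lambda>x. ind F i x * ind G i' x) =
     measure_pmf.expectation (th_pmf N K) (\<lambda>x. \<Prod>k<K. h k (x k))"
    using ind_prod[OF assms(5)] ind_prod[OF assms(6)] by (simp add: h_def prod.distrib)
  also have "\<dots> = (\<Prod>k<K. measure_pmf.expectation (pp N) (h k))"
    unfolding th_pmf_def
    by (rule expectation_prod_Pi_pmf) (auto intro: integrable_measure_pmf_finite fin_pp assms simp: h_def)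
  also have "\<dots> \<le> (\<Prod>k<K. (if k \<in> F then 1 / real N else 1) * (if k \<in> G then 1 / real N else 1))"
  proof (rule prod_mono, rule conjI)
    fix k
    have eq: "measure_pmf.expectation (pp N) (h k) = (\<Sum>j<N. (if k \<in> F \<and> j \<noteq> i then 0 else 1) * (if k \<in> G \<and> j \<noteq> i' then 0 else (1::real))) / real N"
      using E_pp[OF assms(1), of "\<lambda>j. (if k \<in> F \<and> j \<noteq> i then 0 else 1) * (if k \<in> G \<and> j \<noteq> i' then 0 else (1::real))"]
      by (simp add: h_def)
    show "0 \<le> measure_pmf.expectation (pp N) (h k)" unfolding eq by (intro divide_nonneg_nonneg sum_nonneg) auto
    show "measure_pmf.expectation (pp N) (h k) \<le> (if k \<in> F then 1 / real N else 1) * (if k \<in> G then 1 / real N else 1)"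
    proof (cases "k \<in> F"; cases "k \<in> G")
      assume a: "k \<in> F" "k \<in> G"
      have "(\<Sum>j<N. (if k \<in> F \<and> j \<noteq> i then 0 else 1) * (if k \<in> G \<and> j \<noteq> i' then 0 else (1::real))) = 0"
        using a assms(4) by (intro sum.neutral) auto
      thus ?thesis unfolding eq using a by simp
    next
      assume a: "k \<in> F" "k \<notin> G"
      have "(\<Sum>j<N. (if k \<in> F \<and> j \<noteq> i then 0 else 1) * (if k \<in> G \<and> j \<noteq> i' then 0 else (1::real))) = (\<Sum>j<N. if j = i then 1 else 0)"
        using a by (intro sum.cong) auto
      thus ?thesis unfolding eq using a assms by simp
    next
      assume a: "k \<notin> F" "k \<in> G"
      have "(\<Sum>j<N. (if k \<in> F \<and> j \<noteq> i then 0 else 1) * (if k \<in> G \<and> j \<noteq> i' then 0 else (1::real))) = (\<Sum>j<N. if j = i' then 1 else 0)"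
        using a by (intro sum.cong) auto
      thus ?thesis unfolding eq using a assms by simp
    next
      assume a: "k \<notin> F" "k \<notin> G"
      thus ?thesis unfolding eq using assms by simp
    qed
  qed
  also have "\<dots> = (\<Prod>k<K. if k \<in> F then 1 / real N else 1) * (\<Prod>k<K. if k \<in> G then 1 / real N else 1)"
    by (rule prod.distrib)
  also have "(\<Prod>k<K. if k \<in> F then 1 / real N else 1) = (\<Prod>k<K. measure_pmf.expectation (pp N) (\<lambda>v. if k \<in> F \<and> fst v \<noteq> i then 0 else 1))"
    by (intro prod.cong refl E_factor[OF assms(1,2), symmetric])
  also have "\<dots> = measure_pmf.expectation (th_pmf N K) (\<lambda>x. \<Prod>k<K. (\<lambda>k v. if k \<in> F \<and> fst v \<noteq> i then 0 else 1) k (x k))"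
    unfolding th_pmf_def
    by (rule expectation_prod_Pi_pmf[symmetric]) (auto intro: integrable_measure_pmf_finite fin_pp assms)
  also have "\<dots> = measure_pmf.expectation (th_pmf N K) (ind F i)"
    by (rule arg_cong[where f = "measure_pmf.expectation (th_pmf N K)"], rule ext, rule ind_prod[OF assms(5), symmetric])
  also have "(\<Prod>k<K. if k \<in> G then 1 / real N else 1) = (\<Prod>k<K. measure_pmf.expectation (pp N) (\<lambda>v. if k \<in> G \<and> fst v \<noteq> i' then 0 else 1))"
    by (intro prod.cong refl E_factor[OF assms(1,3), symmetric])
  also have "\<dots> = measure_pmf.expectation (th_pmf N K) (\<lambda>x. \<Prod>k<K. (\<lambda>k v. if k \<in> G \<and> fst v \<noteq> i' then 0 else 1) k (x k))"
    unfolding th_pmf_def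
    by (rule expectation_prod_Pi_pmf[symmetric]) (auto intro: integrable_measure_pmf_finite fin_pp assms)
  also have "\<dots> = measure_pmf.expectation (th_pmf N K) (ind G i')"
    by (rule arg_cong[where f = "measure_pmf.expectation (th_pmf N K)"], rule ext, rule ind_prod[OF assms(6), symmetric])
  finally show ?thesis .
qed

definition dd :: "nat \<Rightarrow> nat \<Rightarrow> (nat \<Rightarrow> nat \<times> real) \<Rightarrow> real" where
  "dd K i x = (\<Sum>k<K. if fst (x k) = i then 1 else 0)"

lemma pow_expand: "dd K i x ^ L = (\<Sum>f\<in>PiE {..<L} (\<lambda>_. {..<K}). ind (f ` {..<L}) i x)"
proof -
  have "dd K i x ^ L = (\<Prod>j<L. \<Sum>k<K. (\<lambda>j k. if fst (x k) = i then 1 else 0::real) j k)"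
    by (simp add: dd_def)
  also have "\<dots> = (\<Sum>f\<in>PiE {..<L} (\<lambda>_. {..<K}). \<Prod>j<L. (\<lambda>j k. if fst (x k) = i then 1 else 0::real) j (f j))"
    by (rule prod_sum_PiE) auto
  also have "\<dots> = (\<Sum>f\<in>PiE {..<L} (\<lambda>_. {..<K}). ind (f ` {..<L}) i x)"
  proof (intro sum.cong refl)
    fix f
    have "(\<Prod>j<L. if fst (x (f j)) = i then 1 else 0::real) = (if \<forall>j\<in>{..<L}. fst (x (f j)) = i then 1 else 0)"
      by (rule prod_01) simp
    also have "\<dots> = ind (f ` {..<L}) i x" by (simp add: ind_def)
    finally show "(\<Prod>j<L. (\<lambda>j k. if fst (x k) = i then 1 else 0::real) j (f j)) = ind (f ` {..<L}) i x" by simp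
  qed
  finally show ?thesis .
qed

lemma PiE_img: "f \<in> PiE {..<L} (\<lambda>_. {..<K}) \<Longrightarrow> f ` {..<L} \<subseteq> {..<K}"
  by (auto simp: PiE_def)

lemma E_pow:
  assumes "N > 0" "i < N"
  shows "measure_pmf.expectation (th_pmf N K) (\<lambda>x. dd K i x ^ L) = MM L K (\<lambda>l. (1 / real N) ^ l)"
proof -
  have "measure_pmf.expectation (th_pmf N K) (\<lambda>x. dd K i x ^ L)
     = measure_pmf.expectation (th_pmf N K) (\<lambda>x. \<Sum>f\<in>PiE {..<L} (\<lambda>_. {..<K}). ind (f ` {..<L}) i x)"
    by (simp only: pow_expand)
  also have "\<dots> = (\<Sum>f\<in>PiE {..<L} (\<lambda>_. {..<K}). measure_pmf.expectation (th_pmf N K) (ind (f ` {..<L}) i))"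
    by (rule Bochner_Integration.integral_sum) (rule int_th[OF assms(1)])
  also have "\<dots> = MM L K (\<lambda>l. (1 / real N) ^ l)"
    unfolding MM_def by (intro sum.cong refl E_ind assms PiE_img)
  finally show ?thesis .
qed

lemma E_pow2:
  assumes "N > 0" "i < N" "i' < N"
  shows "measure_pmf.expectation (th_pmf N K) (\<lambda>x. dd K i x ^ L * dd K i' x ^ L)
     \<le> (if i = i' then MM (2*L) K (\<lambda>l. (1 / real N) ^ l) else 0) + MM L K (\<lambda>l. (1 / real N) ^ l) ^ 2"
proof (cases "i = i'")
  case True
  have "measure_pmf.expectation (th_pmf N K) (\<lambda>x. dd K i x ^ L * dd K i' x ^ L)
     = measure_pmf.expectation (th_pmf N K) (\<lambda>x. dd K i x ^ (2*L))"
    using True by (simp add: power_add[symmetric] mult_2)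
  also have "\<dots> = MM (2*L) K (\<lambda>l. (1 / real N) ^ l)" by (rule E_pow[OF assms(1,2)])
  finally show ?thesis using True by simp
next
  case False
  let ?P = "PiE {..<L} (\<lambda>_. {..<K})"
  have "measure_pmf.expectation (th_pmf N K) (\<lambda>x. dd K i x ^ L * dd K i' x ^ L)
     = measure_pmf.expectation (th_pmf N K) (\<lambda>x. \<Sum>f\<in>?P. \<Sum>g\<in>?P. ind (f ` {..<L}) i x * ind (g ` {..<L}) i' x)"
    by (simp only: pow_expand sum_product)
  also have "\<dots> = (\<Sum>f\<in>?P. \<Sum>g\<in>?P. measure_pmf.expectation (th_pmf N K) (\<lambda>x. ind (f ` {..<L}) i x * ind (g ` {..<L}) i' x))"
    by (simp add: Bochner_Integration.integral_sum int_th[OF assms(1)])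
  also have "\<dots> \<le> (\<Sum>f\<in>?P. \<Sum>g\<in>?P. measure_pmf.expectation (th_pmf N K) (ind (f ` {..<L}) i) * measure_pmf.expectation (th_pmf N K) (ind (g ` {..<L}) i'))"
    by (intro sum_mono E_ind2 assms False PiE_img)
  also have "\<dots> = measure_pmf.expectation (th_pmf N K) (\<lambda>x. dd K i x ^ L) * measure_pmf.expectation (th_pmf N K) (\<lambda>x. dd K i' x ^ L)"
    by (simp add: E_pow[OF assms(1,2)] E_pow[OF assms(1,3)] MM_def E_ind[OF assms(1,2)] E_ind[OF assms(1,3)] PiE_img sum_product)
  also have "\<dots> = MM L K (\<lambda>l. (1 / real N) ^ l) ^ 2"
    by (simp add: E_pow[OF assms(1,2)] E_pow[OF assms(1,3)] power2_eq_square)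
  finally show ?thesis using False by simp
qed

definition mm :: "nat \<Rightarrow> nat \<Rightarrow> nat \<Rightarrow> (nat \<Rightarrow> nat \<times> real) \<Rightarrow> real" where
  "mm L N K x = (\<Sum>i<N. dd K i x ^ L) / real N"

lemma E_mm:
  assumes "N > 0"
  shows "measure_pmf.expectation (th_pmf N K) (mm L N K) = MM L K (\<lambda>l. (1 / real N) ^ l)"
proof -
  have "measure_pmf.expectation (th_pmf N K) (mm L N K) = (\<Sum>i<N. measure_pmf.expectation (th_pmf N K) (\<lambda>x. dd K i x ^ L)) / real N"
    unfolding mm_def by (simp add: Bochner_Integration.integral_sum int_th[OF assms(1)])
  also have "\<dots> = MM L K (\<lambda>l. (1 / real N) ^ l)" using assms by (simp add: E_pow)
  finally show ?thesis .
qed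

lemma E_mm2:
  assumes "N > 0"
  shows "measure_pmf.expectation (th_pmf N K) (\<lambda>x. (mm L N K x)^2) \<le>
     MM (2*L) K (\<lambda>l. (1 / real N) ^ l) / real N + MM L K (\<lambda>l. (1 / real N) ^ l) ^ 2"
proof -
  let ?A = "MM (2*L) K (\<lambda>l. (1 / real N) ^ l)" and ?B = "MM L K (\<lambda>l. (1 / real N) ^ l)"
  have "measure_pmf.expectation (th_pmf N K) (\<lambda>x. (mm L N K x)^2) =
     measure_pmf.expectation (th_pmf N K) (\<lambda>x. (\<Sum>i<N. \<Sum>i'<N. dd K i x ^ L * dd K i' x ^ L) / (real N)^2)"
    unfolding mm_def by (simp add: power_divide power2_eq_square sum_product)
  also have "\<dots> = (\<Sum>i<N. \<Sum>i'<N. measure_pmf.expectation (th_pmf N K) (\<lambda>x. dd K i x ^ L * dd K i' x ^ L)) / (real N)^2"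
    by (simp add: Bochner_Integration.integral_sum int_th[OF assms(1)])
  also have "\<dots> \<le> (\<Sum>i<N. \<Sum>i'<N. (if i = i' then ?A else 0) + ?B ^ 2) / (real N)^2"
    by (intro divide_right_mono sum_mono E_pow2 assms) auto
  also have "(\<Sum>i<N. \<Sum>i'<N. (if i = i' then ?A else 0) + ?B ^ 2) = real N * ?A + (real N)^2 * ?B^2"
    by (simp add: sum.distrib power2_eq_square algebra_simps)
  also have "(real N * ?A + (real N)^2 * ?B^2) / (real N)^2 = ?A / real N + ?B^2"
    using assms by (simp add: field_simps power2_eq_square)
  finally show ?thesis .
qed

definition DD :: "nat \<Rightarrow> nat \<Rightarrow> (nat \<Rightarrow> nat \<times> real) \<Rightarrow> nat \<Rightarrow> real mat" where
  "DD N K x L = mat N N (\<lambda>(i,j). if i = j then dd K i x ^ L else 0)"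

lemma SST:
  assumes "N > 0" "x \<in> set_pmf (th_pmf N K)"
  shows "th_matrix N K x * transpose_mat (th_matrix N K x) = DD N K x 1"
proof (rule eq_matI)
  fix i j assume ij: "i < dim_row (DD N K x 1)" "j < dim_col (DD N K x 1)"
  hence ij': "i < N" "j < N" by (auto simp: DD_def)
  have "(th_matrix N K x * transpose_mat (th_matrix N K x)) $$ (i, j) =
     (\<Sum>k<K. (if i = fst (x k) then snd (x k) else 0) * (if j = fst (x k) then snd (x k) else 0))"
    using ij' by (simp add: th_matrix_def scalar_prod_def lessThan_atLeast0)
  also have "\<dots> = (if i = j then dd K i x else 0)"
  proof (cases "i = j")
    case True
    have "(\<Sum>k<K. (if i = fst (x k) then snd (x k) else 0) * (if j = fst (x k) then snd (x k) else 0)) = dd K i x"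
      unfolding dd_def
    proof (intro sum.cong refl)
      fix k assume "k \<in> {..<K}"
      hence "snd (x k) = -1 \<or> snd (x k) = 1" using th_vals[OF assms] by auto
      thus "(if i = fst (x k) then snd (x k) else 0) * (if j = fst (x k) then snd (x k) else 0) = (if fst (x k) = i then 1 else 0)"
        using True by auto
    qed
    thus ?thesis using True by simp
  qed (auto intro!: sum.neutral)
  finally show "(th_matrix N K x * transpose_mat (th_matrix N K x)) $$ (i, j) = DD N K x 1 $$ (i, j)"
    using ij' by (simp add: DD_def)
qed (auto simp: DD_def th_matrix_def)

lemma DD_pow: "DD N K x 1 ^\<^sub>m L = DD N K x L"
proof (induction L)
  case 0
  show ?case by (rule eq_matI) (auto simp: DD_def)
next
  case (Suc L)
  show ?case
  proof (rule eq_matI)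
    fix i j assume ij: "i < dim_row (DD N K x (Suc L))" "j < dim_col (DD N K x (Suc L))"
    hence ij': "i < N" "j < N" by (auto simp: DD_def)
    have "(DD N K x 1 ^\<^sub>m Suc L) $$ (i, j) = (DD N K x L * DD N K x 1) $$ (i,j)" using Suc by simp
    also have "\<dots> = (\<Sum>k<N. (if i = k then dd K i x ^ L else 0) * (if k = j then dd K k x else 0))"
      using ij' by (auto simp: DD_def scalar_prod_def lessThan_atLeast0 intro!: sum.cong)
    also have "\<dots> = (\<Sum>k<N. if k = i then (if i = j then dd K i x ^ Suc L else 0) else 0)"
      by (intro sum.cong) auto
    also have "\<dots> = DD N K x (Suc L) $$ (i, j)" using ij' by (simp add: DD_def)
    finally show "(DD N K x 1 ^\<^sub>m Suc L) $$ (i, j) = DD N K x (Suc L) $$ (i, j)" .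
  qed (auto simp: DD_def)
qed

lemma moment_eq:
  assumes "N > 0" "x \<in> set_pmf (th_pmf N K)"
  shows "moment_L L N K x = mm L N K x"
proof -
  have "moment_L L N K x = (\<Sum>i<N. DD N K x L $$ (i, i)) / real N"
    unfolding moment_L_def Let_def SST[OF assms] DD_pow ..
  also have "\<dots> = mm L N K x" unfolding mm_def DD_def by simp
  finally show ?thesis .
qed

lemma lim_ff:
  assumes "(\<lambda>N. real (K N) / real N) \<longlonglongrightarrow> \<beta>"
  shows "(\<lambda>N. ff (K N) l * (1 / real N) ^ l) \<longlonglongrightarrow> \<beta> ^ l"
proof -
  have eq: "ff (K N) l * (1 / real N) ^ l = (\<Prod>i<l. real (K N) / real N - real i / real N)" for N
  proof -
    have "(1 / real N) ^ l = (\<Prod>i<l. 1 / real N)" by simp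
    hence "ff (K N) l * (1 / real N) ^ l = (\<Prod>i<l. (real (K N) - real i) * (1 / real N))"
      unfolding ff_def by (simp only: prod.distrib)
    also have "\<dots> = (\<Prod>i<l. real (K N) / real N - real i / real N)"
      by (intro prod.cong refl) (simp add: diff_divide_distrib)
    finally show ?thesis .
  qed
  have "(\<lambda>N. \<Prod>i<l. real (K N) / real N - real i / real N) \<longlonglongrightarrow> (\<Prod>i<l. \<beta> - 0)"
    by (intro tendsto_prod tendsto_diff assms lim_const_over_n)
  thus ?thesis unfolding eq by simp
qed

lemma lim_MM:
  assumes "(\<lambda>N. real (K N) / real N) \<longlonglongrightarrow> \<beta>"
  shows "(\<lambda>N. MM M (K N) (\<lambda>l. (1 / real N) ^ l)) \<longlonglongrightarrow> (\<Sum>l\<le>M. real (Stirling M l) * \<beta> ^ l)"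
  unfolding MM_Stirling mult.assoc
  by (intro tendsto_sum tendsto_mult tendsto_const lim_ff assms)

theorem theorem1:
  fixes \<beta> :: real and K :: "nat \<Rightarrow> nat" and L :: nat
  assumes "\<beta> > 0"
    and "\<forall>N\<ge>1. K N \<ge> 1"
    and "(\<lambda>N. real (K N) / real N) \<longlonglongrightarrow> \<beta>"
    and "L \<ge> 1"
  shows "\<forall>\<epsilon>>0. (\<lambda>N. measure_pmf.prob (th_pmf N (K N))
            {x. \<bar>moment_L L N (K N) x - poisson_moment L \<beta>\<bar> > \<epsilon>}) \<longlonglongrightarrow> 0"
proof (intro allI impI)
  fix \<epsilon> :: real assume eps: "\<epsilon> > 0"
  define a where "a = poisson_moment L \<beta>"
  define \<mu>1 where "\<mu>1 N = MM L (K N) (\<lambda>l. (1 / real N) ^ l)" for N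
  define \<mu>2 where "\<mu>2 N = MM (2*L) (K N) (\<lambda>l. (1 / real N) ^ l)" for N
  define U where "U N = (\<mu>2 N * (1 / real N) + (\<mu>1 N - a)^2) / \<epsilon>^2" for N
  have a_eq: "a = (\<Sum>l\<le>L. real (Stirling L l) * \<beta> ^ l)"
  proof -
    have "{..L} = insert 0 {1..L}" by auto
    thus ?thesis unfolding a_def poisson_moment_def using assms(4) by (cases L) auto
  qed
  have l1: "\<mu>1 \<longlonglongrightarrow> a" unfolding \<mu>1_def a_eq by (rule lim_MM[OF assms(3)])
  have l2: "\<mu>2 \<longlonglongrightarrow> (\<Sum>l\<le>2*L. real (Stirling (2*L) l) * \<beta> ^ l)" unfolding \<mu>2_def by (rule lim_MM[OF assms(3)])
  have "U \<longlonglongrightarrow> ((\<Sum>l\<le>2*L. real (Stirling (2*L) l) * \<beta> ^ l) * 0 + (a - a)^2) / \<epsilon>^2"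
    unfolding U_def by (intro tendsto_intros l1 l2) (use eps in auto)
  hence lU: "U \<longlonglongrightarrow> 0" by simp
  have bound: "measure_pmf.prob (th_pmf N (K N)) {x. \<bar>moment_L L N (K N) x - a\<bar> > \<epsilon>} \<le> U N"
    if N: "N \<ge> 1" for N
  proof -
    have N0: "N > 0" using N by simp
    let ?M = "th_pmf N (K N)"
    let ?f = "\<lambda>x. mm L N (K N) x - a"
    have "measure_pmf.prob ?M {x. \<bar>moment_L L N (K N) x - a\<bar> > \<epsilon>}
        = measure_pmf.prob ?M ({x. \<bar>moment_L L N (K N) x - a\<bar> > \<epsilon>} \<inter> set_pmf ?M)"
      by (rule measure_Int_set_pmf[symmetric])
    also have "\<dots> \<le> measure_pmf.prob ?M {x\<in>space ?M. \<bar>?f x\<bar> \<ge> \<epsilon>}"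
      by (rule measure_pmf.finite_measure_mono) (auto simp: moment_eq[OF N0])
    also have "\<dots> \<le> measure_pmf.expectation ?M (\<lambda>x. ?f x ^ 2) / \<epsilon>^2"
      by (rule measure_pmf.second_moment_method) (auto simp: int_th[OF N0] eps)
    also have "measure_pmf.expectation ?M (\<lambda>x. ?f x ^ 2) =
        measure_pmf.expectation ?M (\<lambda>x. (mm L N (K N) x)^2) - 2 * a * measure_pmf.expectation ?M (mm L N (K N)) + a^2"
    proof -
      have "measure_pmf.expectation ?M (\<lambda>x. ?f x ^ 2) =
        measure_pmf.expectation ?M (\<lambda>x. (mm L N (K N) x)^2 - 2 * a * mm L N (K N) x + a^2)"
        by (rule arg_cong[where f="measure_pmf.expectation (th_pmf N (K N))"], rule ext, simp add: power2_diff algebra_simps)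
      also have "\<dots> = measure_pmf.expectation ?M (\<lambda>x. (mm L N (K N) x)^2) - measure_pmf.expectation ?M (\<lambda>x. 2 * a * mm L N (K N) x) + measure_pmf.expectation ?M (\<lambda>x. a^2)"
        by (simp add: int_th[OF N0])
      also have "\<dots> = measure_pmf.expectation ?M (\<lambda>x. (mm L N (K N) x)^2) - 2 * a * measure_pmf.expectation ?M (mm L N (K N)) + a^2"
        by simp
      finally show ?thesis .
    qed
    also have "\<dots> \<le> \<mu>2 N / real N + (\<mu>1 N)^2 - 2 * a * \<mu>1 N + a^2"
      using E_mm2[OF N0, where L=L and K="K N"] E_mm[OF N0, where L=L and K="K N"] unfolding \<mu>1_def \<mu>2_def by simp
    also have "\<dots> = \<mu>2 N * (1 / real N) + (\<mu>1 N - a)^2" by (simp add: power2_diff)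
    finally show ?thesis unfolding U_def using eps by (simp add: divide_right_mono)
  qed
  show "(\<lambda>N. measure_pmf.prob (th_pmf N (K N))
            {x. \<bar>moment_L L N (K N) x - poisson_moment L \<beta>\<bar> > \<epsilon>}) \<longlonglongrightarrow> 0"
    unfolding a_def[symmetric]
  proof (rule tendsto_sandwich[OF _ _ tendsto_const lU])
    show "\<forall>\<^sub>F N in sequentially. 0 \<le> measure_pmf.prob (th_pmf N (K N)) {x. \<bar>moment_L L N (K N) x - a\<bar> > \<epsilon>}"
      by simp
    show "\<forall>\<^sub>F N in sequentially. measure_pmf.prob (th_pmf N (K N)) {x. \<bar>moment_L L N (K N) x - a\<bar> > \<epsilon>} \<le> U N"
      by (rule eventually_sequentiallyI[of 1]) (rule bound)
  qed
qed

end
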